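(* Let the multiplicity sequence $\Lambda=\{\lambda_n,\mu_n\}_{n=1}^{\infty}$ be an interpolating variety for $A^0_{|z|}$. Then for every $\epsilon>0$ there is a constant $m_\epsilon>0$, independent of $n$, such that \[ \inf_{k\ne n}|\lambda_n-\lambda_k|\ge m_\epsilon\exp\Big\{-\frac{\epsilon|\lambda_n|}{\mu_n}\Big\}\qquad\text{for all } n\in\mathbb{N}. \]
   Context: A multiplicity sequence $\Lambda=\{\lambda_n,\mu_n\}_{n=1}^\infty$ consists of distinct nonzero complex numbers $\lambda_n$ with $|\lambda_n|\to\infty$, $|\lambda_n|\le|\lambda_{n+1}|$, and positive integers $\mu_n$. $A^0_{|z|}$ is the space of entire functions $F$ with: for every $\epsilon>0$ there is $M_\epsilon$ with $|F(z)|\le M_\epsilon e^{\epsilon|z|}$ on $\mathbb{C}$. $\Lambda$ is an interpolating variety for $A^0_{|z|}$ if for every doubly indexed complex sequence $(a_{n,k})_{n\in\mathbb{N},0\le k\le\mu_n-1}$ with $\sup_n\sum_{k}|a_{n,k}|e^{-\epsilon|\lambda_n|}<\infty$ for every $\epsilon>0$ there is $f\in A^0_{|z|}$ with $f^{(k)}(\lambda_n)/k!=a_{n,k}$ for all $n,k$. *)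

theory Defs
  imports "HOL-Analysis.Analysis"
begin

text \<open>Multiplicity sequence, indexed from 0 instead of 1.\<close>
definition multiplicity_sequence :: "(nat \<Rightarrow> complex) \<Rightarrow> (nat \<Rightarrow> nat) \<Rightarrow> bool" where
  "multiplicity_sequence lam mu \<longleftrightarrow>
     inj lam \<and> (\<forall>n. lam n \<noteq> 0) \<and> (\<forall>n. norm (lam n) \<le> norm (lam (Suc n))) \<and>
     filterlim (\<lambda>n. norm (lam n)) at_top sequentially \<and> (\<forall>n. mu n \<ge> 1)"

definition A0 :: "(complex \<Rightarrow> complex) set" where
  "A0 = {F. F holomorphic_on UNIV \<and>
            (\<forall>\<epsilon>>0. \<exists>M. \<forall>z. norm (F z) \<le> M * exp (\<epsilon> * norm z))}"

definition interpolating_variety_A0 :: "(nat \<Rightarrow> complex) \<Rightarrow> (nat \<Rightarrow> nat) \<Rightarrow> bool" where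
  "interpolating_variety_A0 lam mu \<longleftrightarrow>
     (\<forall>a :: nat \<Rightarrow> nat \<Rightarrow> complex.
        (\<forall>\<epsilon>>0. bdd_above (range (\<lambda>n. (\<Sum>k<mu n. norm (a n k)) * exp (- \<epsilon> * norm (lam n)))))
        \<longrightarrow> (\<exists>f\<in>A0. \<forall>n. \<forall>k<mu n. (deriv ^^ k) f (lam n) / of_nat (fact k) = a n k))"

end

theory Submission
  imports Defs "HOL-Complex_Analysis.Complex_Analysis"
begin

lemma zero_bound:
  fixes f :: "complex \<Rightarrow> complex"
  assumes holf: "f holomorphic_on UNIV"
    and bnd: "\<And>z. norm (a - z) = 2 \<Longrightarrow> norm (f z) \<le> B"
    and z0: "\<And>j. j < m \<Longrightarrow> (deriv ^^ j) f a = 0"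
    and r: "norm (w - a) \<le> 1"
  shows "norm (f w) \<le> 2 * B * norm (w - a) ^ m"
proof -
  define c where "c j = (deriv ^^ j) f a / fact j * (w - a) ^ j" for j
  have "norm (f (a+2)) \<le> B" using bnd[of "a + 2"] by simp
  then have "B \<ge> 0" by (rule order_trans[OF norm_ge_zero])
  have S: "c sums f w" unfolding c_def
    proof (rule holomorphic_power_series[where r=2])
    show "f holomorphic_on ball a 2" using holomorphic_on_subset[OF holf] by blast
    show "w \<in> ball a 2" using r by (simp add: dist_norm norm_minus_commute)
  qed
  have "(\<Sum>i<m. c i) = 0" using z0 by (simp add: c_def)
  then have S2: "(\<lambda>i. c (i + m)) sums f w" using S sums_iff_shift'[of c m "f w"] by simp
  have C: "norm ((deriv ^^ j) f a) \<le> fact j * B / 2 ^ j" for j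
    proof (rule Cauchy_inequality)
    show "f holomorphic_on ball a 2" using holomorphic_on_subset[OF holf] by blast
    show "continuous_on (cball a 2) f"
      using holomorphic_on_imp_continuous_on[OF holf] continuous_on_subset by blast
  qed (use bnd in auto)
  define q where "q = norm (w - a)"
  have q: "0 \<le> q" "q \<le> 1" using r by (auto simp: q_def)
  have T: "norm (c (i + m)) \<le> B * q ^ m * (1/2) ^ i" for i
  proof -
    have "norm (c (i + m)) = norm ((deriv ^^ (i+m)) f a) / fact (i+m) * q ^ (i+m)"
      by (simp add: c_def q_def norm_divide norm_mult norm_power)
    also have "\<dots> \<le> (fact (i+m) * B / 2 ^ (i+m)) / fact (i+m) * q ^ (i+m)"
      by (intro mult_right_mono divide_right_mono C) (use q in auto)
    also have "\<dots> = B * q ^ m * (q ^ i / 2 ^ i) / 2 ^ m"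
      by (simp add: power_add field_simps)
    also have "\<dots> \<le> B * q ^ m * (1/2) ^ i"
    proof -
      have "q ^ i \<le> 1" using q by (simp add: power_le_one)
      then have "B * q ^ m * (q ^ i / 2 ^ i) \<le> B * q ^ m * (1/2) ^ i"
        using \<open>B \<ge> 0\<close> q by (intro mult_left_mono) (auto simp: power_divide divide_right_mono)
      moreover have "0 \<le> B * q ^ m * (q ^ i / 2 ^ i)" using \<open>B \<ge> 0\<close> q by simp
      moreover have "(1/2::real) ^ m \<le> 1" by (simp add: power_le_one)
      ultimately have "B * q ^ m * (q ^ i / 2 ^ i) * (1/2) ^ m \<le> B * q ^ m * (1/2) ^ i"
        by (smt (verit) mult_left_mono mult_cancel_left1)
      then show ?thesis by (simp add: power_divide)
    qed
    finally show ?thesis .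
  qed
  have sg: "summable (\<lambda>i. B * q ^ m * (1/2::real) ^ i)"
    by (intro summable_mult summable_geometric) simp
  have "norm (f w) = norm (\<Sum>i. c (i + m))" using S2 sums_unique by metis
  also have "\<dots> \<le> (\<Sum>i. B * q ^ m * (1/2::real) ^ i)"
    by (rule norm_suminf_le[OF T sg])
  also have "\<dots> = B * q ^ m * 2"
    using suminf_mult[of "\<lambda>i. (1/2::real)^i" "B * q ^ m"] suminf_geometric[of "1/2::real"]
    by (simp add: summable_geometric)
  finally show ?thesis by (simp add: q_def mult_ac)
qed

lemma sep:
  assumes ms: "multiplicity_sequence lam mu"
  shows "\<exists>\<delta>>0. \<forall>k\<le>N. \<forall>n. n \<noteq> k \<longrightarrow> \<delta> \<le> norm (lam n - lam k)"
proof -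
  have inj: "inj lam" and mono: "\<And>n. norm (lam n) \<le> norm (lam (Suc n))"
    and lim: "filterlim (\<lambda>n. norm (lam n)) at_top sequentially"
    using ms by (auto simp: multiplicity_sequence_def)
  have inc: "incseq (\<lambda>n. norm (lam n))" using mono by (rule incseq_SucI)
  have "eventually (\<lambda>n. norm (lam N) + 1 \<le> norm (lam n)) sequentially"
    using lim by (simp add: filterlim_at_top)
  then obtain M where M: "\<And>n. n \<ge> M \<Longrightarrow> norm (lam N) + 1 \<le> norm (lam n)"
    by (auto simp: eventually_sequentially)
  define D where "D = (\<lambda>(n,k). norm (lam n - lam k)) ` {p \<in> {..<M} \<times> {..N}. fst p \<noteq> snd p}"
  have finD: "finite (insert 1 D)" unfolding D_def by auto
  have posD: "\<forall>x\<in>insert 1 D. 0 < x"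
    unfolding D_def using inj by (auto simp: inj_def)
  define \<delta> where "\<delta> = Min (insert 1 D)"
  have "\<delta> > 0" unfolding \<delta>_def using finD posD by (simp add: Min_gr_iff)
  moreover have "\<delta> \<le> norm (lam n - lam k)" if "k \<le> N" "n \<noteq> k" for n k
  proof (cases "n < M")
    case True
    then have "norm (lam n - lam k) \<in> insert 1 D" unfolding D_def using that by force
    then show ?thesis unfolding \<delta>_def using finD by simp
  next
    case False
    then have "norm (lam N) + 1 \<le> norm (lam n)" using M by simp
    moreover have "norm (lam k) \<le> norm (lam N)" using inc that(1) by (simp add: incseq_def)
    moreover have "norm (lam n) - norm (lam k) \<le> norm (lam n - lam k)" by (rule norm_triangle_ineq2)
    moreover have "\<delta> \<le> 1" unfolding \<delta>_def using finD by simp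
    ultimately show ?thesis by linarith
  qed
  ultimately show ?thesis by blast
qed

theorem lemma2p1:
  fixes lam :: "nat \<Rightarrow> complex" and mu :: "nat \<Rightarrow> nat"
  assumes "multiplicity_sequence lam mu"
    and "interpolating_variety_A0 lam mu"
  shows "\<forall>\<epsilon>>0. \<exists>m>0. \<forall>n.
           (INF k\<in>{k. k \<noteq> n}. norm (lam n - lam k)) \<ge> m * exp (- \<epsilon> * norm (lam n) / real (mu n))"
proof (intro allI impI)
  fix \<epsilon> :: real assume "\<epsilon> > 0"
  have mu1: "\<And>n. mu n \<ge> 1" using assms(1) by (auto simp: multiplicity_sequence_def)
  define E where "E n = exp (- \<epsilon> * norm (lam n) / real (mu n))" for n
  have E0: "0 < E n" for n by (simp add: E_def)
  have E1: "E n \<le> 1" for n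
  proof -
    have "- \<epsilon> * norm (lam n) / real (mu n) \<le> 0"
      using \<open>\<epsilon> > 0\<close> by (intro divide_nonpos_nonneg) auto
    then show ?thesis by (simp add: E_def)
  qed
  show "\<exists>m>0. \<forall>n. (INF k\<in>{k. k \<noteq> n}. norm (lam n - lam k)) \<ge> m * exp (- \<epsilon> * norm (lam n) / real (mu n))"
  proof (rule ccontr)
    assume neg: "\<not> ?thesis"
    have neg': "\<exists>n. (INF k\<in>{k. k \<noteq> n}. norm (lam n - lam k)) < m * E n" if "m > 0" for m
      using neg that by (auto simp: E_def not_le)
    define Q where "Q j N p \<longleftrightarrow> N < fst p \<and> N < snd p \<and> snd p \<noteq> fst p \<and>
        norm (lam (fst p) - lam (snd p)) < E (fst p) / (real j + 1)" for j N and p :: "nat \<times> nat"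
    have pairs: "\<exists>p. Q j N p" for j N
    proof -
      obtain \<delta> where d0: "\<delta> > 0" and d: "\<And>k n. k \<le> N \<Longrightarrow> n \<noteq> k \<Longrightarrow> \<delta> \<le> norm (lam n - lam k)"
        using sep[OF assms(1), of N] by blast
      define m where "m = min \<delta> (1 / (real j + 1))"
      have m0: "m > 0" using d0 by (simp add: m_def)
      obtain n where n: "(INF k\<in>{k. k \<noteq> n}. norm (lam n - lam k)) < m * E n"
        using neg'[OF m0] by blast
      have ne: "(\<lambda>k. norm (lam n - lam k)) ` {k. k \<noteq> n} \<noteq> {}"
        by (metis (mono_tags, lifting) empty_iff image_eqI mem_Collect_eq n_not_Suc_n)
      obtain k where k: "k \<noteq> n" "norm (lam n - lam k) < m * E n"
        using cInf_lessD[OF ne n] by blast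
      have "m * E n \<le> m" using E1[of n] m0 by (simp add: mult_left_le)
      then have lt: "norm (lam n - lam k) < m" using k by linarith
      have "N < n"
      proof (rule ccontr)
        assume "\<not> N < n"
        then have "\<delta> \<le> norm (lam k - lam n)" using d[of n k] k(1) by auto
        then show False using lt by (simp add: m_def norm_minus_commute)
      qed
      moreover have "N < k"
      proof (rule ccontr)
        assume "\<not> N < k"
        then have "\<delta> \<le> norm (lam n - lam k)" using d[of k n] k(1) by auto
        then show False using lt by (simp add: m_def)
      qed
      moreover have "m * E n \<le> E n / (real j + 1)"
      proof -
        have "m \<le> 1 / (real j + 1)" by (simp add: m_def)
        then have "m * E n \<le> 1 / (real j + 1) * E n" using E0[of n] by (intro mult_right_mono) auto
        then show ?thesis by simp
      qed
      ultimately have "Q j N (n, k)" using k by (simp add: Q_def)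
      then show ?thesis by blast
    qed
    obtain pick where pick: "\<And>j N. Q j N (pick j N)" using pairs by metis
    define s where "s = rec_nat (pick 0 0) (\<lambda>j p. pick (Suc j) (max (fst p) (snd p)))"
    have s0: "s 0 = pick 0 0" by (simp add: s_def)
    have sS: "s (Suc j) = pick (Suc j) (max (fst (s j)) (snd (s j)))" for j by (simp add: s_def)
    have hQ: "snd (s j) \<noteq> fst (s j) \<and> norm (lam (fst (s j)) - lam (snd (s j))) < E (fst (s j)) / (real j + 1)" for j
    proof (cases j)
      case 0 then show ?thesis using pick[of 0 0] by (simp add: s0 Q_def)
    next
      case (Suc i) then show ?thesis
        using pick[of "Suc i" "max (fst (s i)) (snd (s i))"] by (simp add: sS Q_def)
    qed
    have ord: "max (fst (s i)) (snd (s i)) < fst (s j) \<and> max (fst (s i)) (snd (s i)) < snd (s j)"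
      if "i < j" for i j
      using that
    proof (induction j)
      case 0 then show ?case by simp
    next
      case (Suc j)
      have step: "max (fst (s j)) (snd (s j)) < fst (s (Suc j)) \<and> max (fst (s j)) (snd (s j)) < snd (s (Suc j))"
        using pick[of "Suc j" "max (fst (s j)) (snd (s j))"] by (simp add: sS Q_def)
      show ?case
      proof (cases "i = j")
        case True then show ?thesis using step by simp
      next
        case False
        then have "i < j" using Suc.prems by simp
        then show ?thesis using Suc.IH step by auto
      qed
    qed
    have disj: "fst (s i) \<noteq> snd (s j)" for i j
    proof (cases i j rule: linorder_cases)
      case less then show ?thesis using ord[of i j] by auto
    next
      case equal then show ?thesis using hQ[of i] by auto
    next
      case greater then show ?thesis using ord[of j i] by auto
    qed
    define T where "T = range (\<lambda>j. snd (s j))"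
    define a where "a n (l::nat) = (if n \<in> T \<and> l = 0 then 1 else 0 :: complex)" for n l
    have bdd: "\<forall>\<epsilon>>0. bdd_above (range (\<lambda>n. (\<Sum>k<mu n. norm (a n k)) * exp (- \<epsilon> * norm (lam n))))"
    proof (intro allI impI)
      fix e :: real assume "e > 0"
      have "(\<Sum>k<mu n. norm (a n k)) * exp (- e * norm (lam n)) \<le> 1" for n
      proof -
        have s1: "(\<Sum>k<mu n. norm (a n k)) \<le> (\<Sum>k<mu n. (if k = 0 then 1 else 0))"
          by (intro sum_mono) (simp add: a_def)
        also have "\<dots> \<le> 1" by simp
        finally have A: "(\<Sum>k<mu n. norm (a n k)) \<le> 1" .
        have B: "0 \<le> (\<Sum>k<mu n. norm (a n k))" by (intro sum_nonneg) simp
        have C: "exp (- e * norm (lam n)) \<le> 1" using \<open>e > 0\<close> by simp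
        show ?thesis using A B C mult_mono[OF A C] by simp
      qed
      then show "bdd_above (range (\<lambda>n. (\<Sum>k<mu n. norm (a n k)) * exp (- e * norm (lam n))))"
        by (intro bdd_aboveI[where M=1]) auto
    qed
    obtain f where fA: "f \<in> A0" and interp: "\<And>n k. k < mu n \<Longrightarrow> (deriv ^^ k) f (lam n) / of_nat (fact k) = a n k"
      using assms(2) bdd unfolding interpolating_variety_A0_def by blast
    have holf: "f holomorphic_on UNIV" using fA by (simp add: A0_def)
    obtain M where M: "\<And>z. norm (f z) \<le> M * exp (\<epsilon> * norm z)"
      using fA \<open>\<epsilon> > 0\<close> unfolding A0_def by blast
    have M0: "M \<ge> 0"
    proof -
      have "0 \<le> M * exp (\<epsilon> * norm (0::complex))" using M[of 0] by (rule order_trans[OF norm_ge_zero])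
      then show ?thesis by simp
    qed
    obtain j :: nat where j: "2 * M * exp (2 * \<epsilon>) < real j + 1"
    proof -
      obtain j :: nat where "2 * M * exp (2 * \<epsilon>) < real j"
        using reals_Archimedean2 by blast
      then have "2 * M * exp (2 * \<epsilon>) < real j + 1" by linarith
      then show ?thesis using that by blast
    qed
    define n where "n = fst (s j)"
    define k where "k = snd (s j)"
    define r where "r = norm (lam k - lam n)"
    have kT: "k \<in> T" by (simp add: T_def k_def)
    have nT: "n \<notin> T" using disj by (auto simp: T_def n_def)
    have fk: "f (lam k) = 1" using interp[of 0 k] mu1[of k] kT by (simp add: a_def)
    have zn: "(deriv ^^ l) f (lam n) = 0" if "l < mu n" for l
      using interp[OF that] nT by (simp add: a_def)
    have rlt: "r < E n / (real j + 1)" using hQ[of j] by (simp add: r_def n_def k_def norm_minus_commute)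
    have r0: "0 \<le> r" by (simp add: r_def)
    have Ej: "E n / (real j + 1) \<le> 1" using E1[of n] E0[of n] by (simp add: field_simps)
    have r1: "r \<le> 1" using rlt Ej by linarith
    have sph: "norm (f z) \<le> M * exp (\<epsilon> * (norm (lam n) + 2))" if "norm (lam n - z) = 2" for z
    proof -
      have "norm z \<le> norm (lam n) + 2" using that norm_triangle_ineq3[of z "lam n"]
        by (metis add.commute norm_minus_commute norm_triangle_sub)
      then have "exp (\<epsilon> * norm z) \<le> exp (\<epsilon> * (norm (lam n) + 2))" using \<open>\<epsilon> > 0\<close> by simp
      then show ?thesis using M[of z] M0 by (meson mult_left_mono order_trans)
    qed
    have "norm (f (lam k)) \<le> 2 * (M * exp (\<epsilon> * (norm (lam n) + 2))) * r ^ mu n"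
      unfolding r_def by (rule zero_bound[OF holf sph zn]) (use r1 in \<open>auto simp: r_def\<close>)
    then have one: "1 \<le> 2 * (M * exp (\<epsilon> * (norm (lam n) + 2))) * r ^ mu n" by (simp add: fk)
    have "r ^ mu n \<le> (E n / (real j + 1)) ^ mu n"
      using rlt r0 by (intro power_mono) auto
    also have "\<dots> = E n ^ mu n * (1 / (real j + 1)) ^ mu n" by (simp add: power_divide)
    also have "\<dots> \<le> E n ^ mu n * (1 / (real j + 1))"
    proof -
      have "(1 / (real j + 1)) ^ mu n \<le> (1 / (real j + 1)) ^ 1"
        using mu1[of n] by (intro power_decreasing) auto
      then show ?thesis using E0[of n] by (intro mult_left_mono) auto
    qed
    also have "E n ^ mu n = exp (- \<epsilon> * norm (lam n))"
    proof -
      have "E n ^ mu n = exp (real (mu n) * (- \<epsilon> * norm (lam n) / real (mu n)))"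
        by (simp only: E_def exp_of_nat_mult)
      also have "\<dots> = exp (- \<epsilon> * norm (lam n))" using mu1[of n] by simp
      finally show ?thesis .
    qed
    finally have rb: "r ^ mu n \<le> exp (- \<epsilon> * norm (lam n)) * (1 / (real j + 1))" .
    have K0: "0 \<le> 2 * (M * exp (\<epsilon> * (norm (lam n) + 2)))" using M0 by simp
    have "1 \<le> 2 * (M * exp (\<epsilon> * (norm (lam n) + 2))) * (exp (- \<epsilon> * norm (lam n)) * (1 / (real j + 1)))"
      using one mult_left_mono[OF rb K0] by linarith
    also have "\<dots> = 2 * M * (exp (\<epsilon> * (norm (lam n) + 2)) * exp (- \<epsilon> * norm (lam n))) / (real j + 1)"
      by simp
    also have "exp (\<epsilon> * (norm (lam n) + 2)) * exp (- \<epsilon> * norm (lam n)) = exp (2 * \<epsilon>)"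
      by (simp add: exp_add[symmetric] algebra_simps)
    finally have "1 \<le> 2 * M * exp (2 * \<epsilon>) / (real j + 1)" .
    then show False using j by (simp add: field_simps)
  qed
qed

end
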